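(* Let $f\colon U\otimes V\rightarrow W$ be a multiplication and let $\alpha=(a\ b\ c)$ be a dimension vector for $f$. Then the representation variety $R(f,\alpha)$ has exactly one left general irreducible component.
   Context: Fix a ground field $k$. A multiplication is a linear map $f\colon U\otimes V\rightarrow W$ of finite dimensional $k$-vector spaces. A representation $R$ of $f$ consists of finite dimensional vector spaces $R(0),R(1),R(2)$ and linear maps $R(\phi_{01})\colon R(0)\otimes U\rightarrow R(1)$, $R(\phi_{12})\colon R(1)\otimes V\rightarrow R(2)$, $R(\phi_{02})\colon R(0)\otimes W\rightarrow R(2)$ with $R(\phi_{12})\circ(R(\phi_{01})\otimes I_V)=R(\phi_{02})\circ(I_{R(0)}\otimes f)$ as maps $R(0)\otimes U\otimes V\rightarrow R(2)$. Its dimension vector is $(\dim R(0)\ \dim R(1)\ \dim R(2))$. For $\alpha=(a\ b\ c)$, $R(f,\alpha)$ is the closed subvariety of $\mathrm{Hom}(k^a\otimes U,k^b)\times\mathrm{Hom}(k^b\otimes V,k^c)\times\mathrm{Hom}(k^a\otimes W,k^c)$ of triples satisfying this relation. A representation of the vector space $U$ of dimension vector $(a\ b)$ is a linear map $k^a\otimes U\rightarrow k^b$; these form the vector space $R(U,(a\ b))=\mathrm{Hom}(k^a\otimes U,k^b)$. There is a restriction morphism $R(f,\alpha)\rightarrow R(U,(a\ b))$, $(\phi_{01},\phi_{12},\phi_{02})\mapsto\phi_{01}$. An irreducible component $C$ of $R(f,\alpha)$ is called left general if the restriction of this morphism to $C$ is dominant. *)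

theory Defs
  imports Main
begin

inductive_set polyfuns :: "(('i \<Rightarrow> 'k::comm_ring_1) \<Rightarrow> 'k) set" where
  const: "(\<lambda>x. c) \<in> polyfuns"
| var: "(\<lambda>x. x i) \<in> polyfuns"
| add: "p \<in> polyfuns \<Longrightarrow> q \<in> polyfuns \<Longrightarrow> (\<lambda>x. p x + q x) \<in> polyfuns"
| mult: "p \<in> polyfuns \<Longrightarrow> q \<in> polyfuns \<Longrightarrow> (\<lambda>x. p x * q x) \<in> polyfuns"

definition affine_space :: "'i set \<Rightarrow> ('i \<Rightarrow> 'k::comm_ring_1) set" where
  "affine_space I = {x. \<forall>i. i \<notin> I \<longrightarrow> x i = 0}"

definition zariski_closed :: "'i set \<Rightarrow> ('i \<Rightarrow> 'k::comm_ring_1) set \<Rightarrow> bool" where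
  "zariski_closed I Z \<longleftrightarrow>
     (\<exists>P \<subseteq> polyfuns. Z = {x \<in> affine_space I. \<forall>p\<in>P. p x = 0})"

definition zariski_closure :: "'i set \<Rightarrow> ('i \<Rightarrow> 'k::comm_ring_1) set \<Rightarrow> ('i \<Rightarrow> 'k) set" where
  "zariski_closure I X = \<Inter>{Z. zariski_closed I Z \<and> X \<subseteq> Z}"

definition zariski_irreducible :: "'i set \<Rightarrow> ('i \<Rightarrow> 'k::comm_ring_1) set \<Rightarrow> bool" where
  "zariski_irreducible I Y \<longleftrightarrow> Y \<noteq> {} \<and>
     (\<forall>Z1 Z2. zariski_closed I Z1 \<longrightarrow> zariski_closed I Z2 \<longrightarrow>
        Y = (Y \<inter> Z1) \<union> (Y \<inter> Z2) \<longrightarrow> Y \<inter> Z1 = Y \<or> Y \<inter> Z2 = Y)"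

definition irreducible_component :: "'i set \<Rightarrow> ('i \<Rightarrow> 'k::comm_ring_1) set \<Rightarrow> ('i \<Rightarrow> 'k) set \<Rightarrow> bool" where
  "irreducible_component I X C \<longleftrightarrow> C \<subseteq> X \<and> zariski_irreducible I C \<and>
     (\<forall>D. C \<subseteq> D \<longrightarrow> D \<subseteq> X \<longrightarrow> zariski_irreducible I D \<longrightarrow> D = C)"

text \<open>Bases are fixed: U = k^u, V = k^v, W = k^w, the multiplication f is
  given by structure constants: f(e_i \<otimes> e_j) = sum_{l<w} fc i j l e_l.
  A point of Hom(k^a\<otimes>U,k^b) x Hom(k^b\<otimes>V,k^c) x Hom(k^a\<otimes>W,k^c) is a function on
  the index type below:
    Inl (p,i,q)       : coefficient of e_q in phi01(e_p \<otimes> e_i),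
    Inr (Inl (q,j,r)) : coefficient of e_r in phi12(e_q \<otimes> e_j),
    Inr (Inr (p,l,r)) : coefficient of e_r in phi02(e_p \<otimes> e_l).\<close>

type_synonym ridx = "(nat \<times> nat \<times> nat) + (nat \<times> nat \<times> nat) + (nat \<times> nat \<times> nat)"

definition rep_index :: "nat \<Rightarrow> nat \<Rightarrow> nat \<Rightarrow> nat \<Rightarrow> nat \<Rightarrow> nat \<Rightarrow> ridx set" where
  "rep_index u v w a b c =
     Inl ` ({..<a} \<times> {..<u} \<times> {..<b}) \<union>
     Inr ` Inl ` ({..<b} \<times> {..<v} \<times> {..<c}) \<union>
     Inr ` Inr ` ({..<a} \<times> {..<w} \<times> {..<c})"

text \<open>Index set of R(U,(a b)) = Hom(k^a \<otimes> U, k^b).\<close>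
definition left_index :: "nat \<Rightarrow> nat \<Rightarrow> nat \<Rightarrow> (nat \<times> nat \<times> nat) set" where
  "left_index u a b = {..<a} \<times> {..<u} \<times> {..<b}"

definition rep_variety ::
  "nat \<Rightarrow> nat \<Rightarrow> nat \<Rightarrow> (nat \<Rightarrow> nat \<Rightarrow> nat \<Rightarrow> 'k::comm_ring_1) \<Rightarrow> nat \<Rightarrow> nat \<Rightarrow> nat \<Rightarrow> (ridx \<Rightarrow> 'k) set" where
  "rep_variety u v w fc a b c =
     {x \<in> affine_space (rep_index u v w a b c).
        \<forall>p<a. \<forall>i<u. \<forall>j<v. \<forall>r<c.
          (\<Sum>q<b. x (Inl (p, i, q)) * x (Inr (Inl (q, j, r))))
          = (\<Sum>l<w. fc i j l * x (Inr (Inr (p, l, r))))}"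

definition restrict_left :: "(ridx \<Rightarrow> 'k) \<Rightarrow> (nat \<times> nat \<times> nat \<Rightarrow> 'k)" where
  "restrict_left x = (\<lambda>t. x (Inl t))"

definition left_general ::
  "nat \<Rightarrow> nat \<Rightarrow> nat \<Rightarrow> (nat \<Rightarrow> nat \<Rightarrow> nat \<Rightarrow> 'k::comm_ring_1) \<Rightarrow> nat \<Rightarrow> nat \<Rightarrow> nat \<Rightarrow> (ridx \<Rightarrow> 'k) set \<Rightarrow> bool" where
  "left_general u v w fc a b c C \<longleftrightarrow>
     irreducible_component (rep_index u v w a b c) (rep_variety u v w fc a b c) C \<and>
     zariski_closure (left_index u a b) (restrict_left ` C) = affine_space (left_index u a b)"

end

theory Submission
  imports Defs "Jordan_Normal_Form.Determinant"
begin


lemmas pf_const = polyfuns.const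
lemmas pf_var = polyfuns.var
lemmas pf_add = polyfuns.add
lemmas pf_mult = polyfuns.mult

lemma pf_neg: "p \<in> polyfuns \<Longrightarrow> (\<lambda>x. - p x) \<in> polyfuns"
proof -
  assume "p \<in> polyfuns"
  hence "(\<lambda>x. (\<lambda>x. -1) x * p x) \<in> polyfuns" by (intro pf_mult pf_const)
  thus ?thesis by simp
qed

lemma pf_diff: "p \<in> polyfuns \<Longrightarrow> q \<in> polyfuns \<Longrightarrow> (\<lambda>x. p x - q x) \<in> polyfuns"
proof -
  assume "p \<in> polyfuns" "q \<in> polyfuns"
  hence "(\<lambda>x. p x + (- q x)) \<in> polyfuns" by (intro pf_add pf_neg)
  thus ?thesis by simp
qed

lemma pf_sum: "finite S \<Longrightarrow> (\<And>s. s \<in> S \<Longrightarrow> f s \<in> polyfuns) \<Longrightarrow> (\<lambda>x. \<Sum>s\<in>S. f s x) \<in> polyfuns"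
proof (induction S rule: finite_induct)
  case empty
  then show ?case using pf_const[of 0] by simp
next
  case (insert a F)
  then show ?case using pf_add[of "f a" "\<lambda>x. \<Sum>s\<in>F. f s x"] by simp
qed

lemma pf_prod: "finite S \<Longrightarrow> (\<And>s. s \<in> S \<Longrightarrow> f s \<in> polyfuns) \<Longrightarrow> (\<lambda>x. \<Prod>s\<in>S. f s x) \<in> polyfuns"
proof (induction S rule: finite_induct)
  case empty
  then show ?case using pf_const[of 1] by simp
next
  case (insert a F)
  then show ?case using pf_mult[of "f a" "\<lambda>x. \<Prod>s\<in>F. f s x"] by simp
qed

lemma pf_comp: "p \<in> polyfuns \<Longrightarrow> (\<And>j. (\<lambda>x. G x j) \<in> polyfuns) \<Longrightarrow> (\<lambda>x. p (G x)) \<in> polyfuns"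
proof (induction p rule: polyfuns.induct)
  case (const c)
  show ?case by (rule pf_const)
next
  case (var i)
  then show ?case by simp
next
  case (add p q)
  then show ?case using pf_add by blast
next
  case (mult p q)
  then show ?case using pf_mult by blast
qed

lemma pf_det:
  assumes "\<And>x. M x \<in> carrier_mat n n"
    and "\<And>i j. i < n \<Longrightarrow> j < n \<Longrightarrow> (\<lambda>x. M x $$ (i,j)) \<in> polyfuns"
  shows "(\<lambda>x. det (M x)) \<in> polyfuns"
proof -
  have "(\<lambda>x. \<Sum>p\<in>{p. p permutes {0..<n}}. signof p * (\<Prod>i=0..<n. M x $$ (i, p i))) \<in> polyfuns"
  proof (rule pf_sum)
    show "finite {p. p permutes {0..<n}}" by (simp add: finite_permutations)
    fix p assume p: "p \<in> {p. p permutes {0..<n}}"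
    show "(\<lambda>x. signof p * (\<Prod>i=0..<n. M x $$ (i, p i))) \<in> polyfuns"
    proof (rule pf_mult[OF pf_const], rule pf_prod)
      fix i assume i: "i \<in> {0..<n}"
      hence "p i < n" using p permutes_in_image by fastforce
      thus "(\<lambda>x. M x $$ (i, p i)) \<in> polyfuns" using assms(2) i by auto
    qed simp
  qed
  thus ?thesis using det_def'[OF assms(1)] by simp
qed

lemma pf_line:
  fixes p :: "('i \<Rightarrow> 'k::comm_ring_1) \<Rightarrow> 'k"
  shows "p \<in> polyfuns \<Longrightarrow> \<exists>P. \<forall>t. p (\<lambda>i. x i + t * d i) = poly P t"
proof (induction p rule: polyfuns.induct)
  case (const c)
  show ?case by (rule exI[of _ "[:c:]"]) simp
next
  case (var i)
  show ?case by (rule exI[of _ "[:x i, d i:]"]) (simp add: mult.commute)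
next
  case (add p q)
  then obtain P Q where "\<forall>t. p (\<lambda>i. x i + t * d i) = poly P t" "\<forall>t. q (\<lambda>i. x i + t * d i) = poly Q t" by blast
  then show ?case by (intro exI[of _ "P + Q"]) simp
next
  case (mult p q)
  then obtain P Q where "\<forall>t. p (\<lambda>i. x i + t * d i) = poly P t" "\<forall>t. q (\<lambda>i. x i + t * d i) = poly Q t" by blast
  then show ?case by (intro exI[of _ "P * Q"]) simp
qed

lemma aff_irr:
  fixes p q :: "('i \<Rightarrow> 'k::field) \<Rightarrow> 'k"
  assumes inf: "infinite (UNIV :: 'k set)"
    and p: "p \<in> polyfuns" and q: "q \<in> polyfuns"
    and x: "x \<in> affine_space J" and px: "p x \<noteq> 0"
    and y: "y \<in> affine_space J" and qy: "q y \<noteq> 0"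
  shows "\<exists>z\<in>affine_space J. p z \<noteq> 0 \<and> q z \<noteq> 0"
proof -
  define d where "d = (\<lambda>i. y i - x i)"
  obtain P where P: "\<forall>t. p (\<lambda>i. x i + t * d i) = poly P t" using pf_line[OF p] by blast
  obtain Q where Q: "\<forall>t. q (\<lambda>i. x i + t * d i) = poly Q t" using pf_line[OF q] by blast
  have "poly P 0 = p x" using P[rule_format, of 0] by simp
  hence P0: "P \<noteq> 0" using px by auto
  have "poly Q 1 = q y" using Q[rule_format, of 1] by (simp add: d_def)
  hence Q0: "Q \<noteq> 0" using qy by auto
  have "P * Q \<noteq> 0" using P0 Q0 by simp
  hence "finite {t. poly (P * Q) t = 0}" by (rule poly_roots_finite)
  then obtain t where t: "poly (P * Q) t \<noteq> 0" using inf
    by (metis (mono_tags, lifting) UNIV_I finite_subset mem_Collect_eq subsetI)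
  define z where "z = (\<lambda>i. x i + t * d i)"
  have "z \<in> affine_space J" using x y unfolding affine_space_def z_def d_def by auto
  moreover have "p z \<noteq> 0" "q z \<noteq> 0" using t P Q unfolding z_def by auto
  ultimately show ?thesis by blast
qed



definition IRR :: "('i \<Rightarrow> 'k::comm_ring_1) set \<Rightarrow> bool" where
  "IRR Y \<longleftrightarrow> (\<forall>p q. p \<in> polyfuns \<longrightarrow> q \<in> polyfuns \<longrightarrow> (\<exists>y\<in>Y. p y \<noteq> 0) \<longrightarrow> (\<exists>y\<in>Y. q y \<noteq> 0)
      \<longrightarrow> (\<exists>y\<in>Y. p y \<noteq> 0 \<and> q y \<noteq> 0))"

lemma closed_V: "p \<in> polyfuns \<Longrightarrow> zariski_closed I {x \<in> affine_space I. p x = 0}"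
  unfolding zariski_closed_def by (rule exI[of _ "{p}"]) auto

lemma closed_aff: "zariski_closed I (affine_space I)"
  unfolding zariski_closed_def by (rule exI[of _ "{}"]) auto

lemma irr_IRR:
  fixes Y :: "('i \<Rightarrow> 'k::comm_ring_1) set"
  assumes "Y \<subseteq> affine_space I" "zariski_irreducible I Y"
  shows "IRR Y"
  unfolding IRR_def
proof (intro allI impI)
  fix p q :: "_ \<Rightarrow> 'k" assume p: "p \<in> polyfuns" and q: "q \<in> polyfuns"
    and "\<exists>y\<in>Y. p y \<noteq> 0" "\<exists>y\<in>Y. q y \<noteq> 0"
  then obtain y1 y2 where y: "y1 \<in> Y" "p y1 \<noteq> 0" "y2 \<in> Y" "q y2 \<noteq> 0" by blast
  show "\<exists>y\<in>Y. p y \<noteq> 0 \<and> q y \<noteq> 0"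
  proof (rule ccontr)
    assume H: "\<not> ?thesis"
    let ?Z1 = "{x \<in> affine_space I. p x = 0}" and ?Z2 = "{x \<in> affine_space I. q x = 0}"
    have U: "Y = (Y \<inter> ?Z1) \<union> (Y \<inter> ?Z2)" using H assms(1) by auto
    have irr: "\<forall>Z1 Z2. zariski_closed I Z1 \<longrightarrow> zariski_closed I Z2 \<longrightarrow>
        Y = (Y \<inter> Z1) \<union> (Y \<inter> Z2) \<longrightarrow> Y \<inter> Z1 = Y \<or> Y \<inter> Z2 = Y"
      using assms(2) unfolding zariski_irreducible_def by (rule conjunct2)
    have "Y \<inter> ?Z1 = Y \<or> Y \<inter> ?Z2 = Y"
      using irr[rule_format, OF closed_V[OF p, of I] closed_V[OF q, of I] U] .
    thus False using y by blast
  qed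
qed

lemma IRR_irr:
  assumes "Y \<subseteq> affine_space I" "Y \<noteq> {}" "IRR Y"
  shows "zariski_irreducible I Y"
  unfolding zariski_irreducible_def
proof (intro conjI allI impI)
  show "Y \<noteq> {}" by fact
  fix Z1 Z2 assume c1: "zariski_closed I Z1" and c2: "zariski_closed I Z2"
    and U: "Y = Y \<inter> Z1 \<union> Y \<inter> Z2"
  obtain P1 where P1: "P1 \<subseteq> polyfuns" "Z1 = {x \<in> affine_space I. \<forall>p\<in>P1. p x = 0}"
    using c1 unfolding zariski_closed_def by blast
  obtain P2 where P2: "P2 \<subseteq> polyfuns" "Z2 = {x \<in> affine_space I. \<forall>p\<in>P2. p x = 0}"
    using c2 unfolding zariski_closed_def by blast
  show "Y \<inter> Z1 = Y \<or> Y \<inter> Z2 = Y"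
  proof (rule ccontr)
    assume "\<not> ?thesis"
    then obtain y1 y2 where y: "y1 \<in> Y" "y1 \<notin> Z1" "y2 \<in> Y" "y2 \<notin> Z2" by blast
    have "\<exists>p\<in>P1. p y1 \<noteq> 0" using y(1,2) assms(1) P1(2) by blast
    moreover have "\<exists>p\<in>P2. p y2 \<noteq> 0" using y(3,4) assms(1) P2(2) by blast
    ultimately obtain p q where pq: "p \<in> P1" "p y1 \<noteq> 0" "q \<in> P2" "q y2 \<noteq> 0" by blast
    have pp: "p \<in> polyfuns" "q \<in> polyfuns" using pq P1(1) P2(1) by auto
    have "\<exists>y\<in>Y. p y \<noteq> 0" "\<exists>y\<in>Y. q y \<noteq> 0" using y(1,3) pq by auto
    from assms(3)[unfolded IRR_def, rule_format, OF pp this]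
    obtain y where "y \<in> Y" "p y \<noteq> 0" "q y \<noteq> 0" by blast
    moreover have "y \<in> Y \<inter> Z1 \<union> Y \<inter> Z2" using U \<open>y \<in> Y\<close> by metis
    hence "y \<in> Z1 \<or> y \<in> Z2" by blast
    ultimately show False using P1(2) P2(2) pq by auto
  qed
qed

lemma cl_sub: "X \<subseteq> zariski_closure I X"
  unfolding zariski_closure_def by blast

lemma cl_min: "zariski_closed I Z \<Longrightarrow> X \<subseteq> Z \<Longrightarrow> zariski_closure I X \<subseteq> Z"
  unfolding zariski_closure_def by blast

lemma cl_aff: "X \<subseteq> affine_space I \<Longrightarrow> zariski_closure I X \<subseteq> affine_space I"
  by (rule cl_min[OF closed_aff])

lemma cl_pf:
  assumes "X \<subseteq> affine_space I" "p \<in> polyfuns" "\<forall>y\<in>X. p y = 0" "x \<in> zariski_closure I X"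
  shows "p x = 0"
proof -
  have "X \<subseteq> {x \<in> affine_space I. p x = 0}" using assms by blast
  from cl_min[OF closed_V[OF assms(2)] this] assms(4) show ?thesis by blast
qed

lemma cl_char:
  assumes "x \<in> affine_space I" "\<And>p. p \<in> polyfuns \<Longrightarrow> \<forall>y\<in>X. p y = 0 \<Longrightarrow> p x = 0"
  shows "x \<in> zariski_closure I X"
  unfolding zariski_closure_def
proof (rule InterI, clarify)
  fix Z assume c: "zariski_closed I Z" and XZ: "X \<subseteq> Z"
  obtain P where P: "P \<subseteq> polyfuns" "Z = {x \<in> affine_space I. \<forall>p\<in>P. p x = 0}"
    using c unfolding zariski_closed_def by blast
  show "x \<in> Z" unfolding P(2) using assms P XZ by blast
qed

lemma generic_component:
  fixes h :: "('i \<Rightarrow> 'k::comm_ring_1) \<Rightarrow> 'k"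
  assumes RA: "R \<subseteq> affine_space I" and Rc: "zariski_closed I R" and h: "h \<in> polyfuns"
    and Ydef: "Y = {z \<in> R. h z \<noteq> 0}" and Yne: "Y \<noteq> {}" and YI: "IRR Y"
  shows "irreducible_component I R (zariski_closure I Y)"
    and "\<And>C. irreducible_component I R C \<Longrightarrow> (\<exists>z\<in>C. h z \<noteq> 0) \<Longrightarrow> C = zariski_closure I Y"
proof -
  have Ymem: "\<And>z. z \<in> Y \<longleftrightarrow> z \<in> R \<and> h z \<noteq> 0" using Ydef by simp
  have YR: "Y \<subseteq> R" using Ymem by blast
  have YA: "Y \<subseteq> affine_space I" using RA YR by (rule order_trans[rotated])
  have K: "D \<subseteq> zariski_closure I Y" if D: "D \<subseteq> R" "zariski_irreducible I D" "\<exists>d\<in>D. h d \<noteq> 0" for D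
  proof
    fix x assume x: "x \<in> D"
    have DI: "IRR D" using irr_IRR[OF _ D(2)] D(1) RA by blast
    show "x \<in> zariski_closure I Y"
    proof (rule cl_char)
      show "x \<in> affine_space I" using x D(1) RA by blast
      fix p assume p: "p \<in> polyfuns" and pY: "\<forall>y\<in>Y. p y = 0"
      show "p x = 0"
      proof (rule ccontr)
        assume "p x \<noteq> 0"
        hence "\<exists>y\<in>D. p y \<noteq> 0" using x by blast
        from DI[unfolded IRR_def, rule_format, OF p h this D(3)]
        obtain d where "d \<in> D" "p d \<noteq> 0" "h d \<noteq> 0" by blast
        hence "d \<in> Y" using Ymem D(1) by blast
        thus False using pY \<open>p d \<noteq> 0\<close> by blast
      qed
    qed
  qed
  have clR: "zariski_closure I Y \<subseteq> R" using cl_min[OF Rc YR] .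
  have clirr: "zariski_irreducible I (zariski_closure I Y)"
  proof (rule IRR_irr)
    show "zariski_closure I Y \<subseteq> affine_space I" by (rule cl_aff[OF YA])
    show "zariski_closure I Y \<noteq> {}" using Yne cl_sub by blast
    show "IRR (zariski_closure I Y)"
      unfolding IRR_def
    proof (intro allI impI)
      fix p q :: "_ \<Rightarrow> 'k" assume p: "p \<in> polyfuns" and q: "q \<in> polyfuns"
        and ep: "\<exists>y\<in>zariski_closure I Y. p y \<noteq> 0" and eq: "\<exists>y\<in>zariski_closure I Y. q y \<noteq> 0"
      have e1: "\<exists>y\<in>Y. p y \<noteq> 0" using cl_pf[OF YA p] ep by blast
      have e2: "\<exists>y\<in>Y. q y \<noteq> 0" using cl_pf[OF YA q] eq by blast
      from YI[unfolded IRR_def, rule_format, OF p q e1 e2] obtain y where "y \<in> Y" "p y \<noteq> 0" "q y \<noteq> 0" by blast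
      thus "\<exists>y\<in>zariski_closure I Y. p y \<noteq> 0 \<and> q y \<noteq> 0" using cl_sub by blast
    qed
  qed
  have hY: "\<exists>d\<in>zariski_closure I Y. h d \<noteq> 0" using Yne Ymem cl_sub by blast
  show comp: "irreducible_component I R (zariski_closure I Y)"
    unfolding irreducible_component_def
  proof (intro conjI allI impI)
    show "zariski_closure I Y \<subseteq> R" by fact
    show "zariski_irreducible I (zariski_closure I Y)" by fact
    fix D assume D: "zariski_closure I Y \<subseteq> D" "D \<subseteq> R" "zariski_irreducible I D"
    have "\<exists>d\<in>D. h d \<noteq> 0" using hY D(1) by blast
    hence "D \<subseteq> zariski_closure I Y" using K[OF D(2,3)] by blast
    thus "D = zariski_closure I Y" using D(1) by (rule subset_antisym)
  qed
  fix C assume C: "irreducible_component I R C" and hC: "\<exists>z\<in>C. h z \<noteq> 0"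
  have C1: "C \<subseteq> R" "zariski_irreducible I C"
    and C2: "\<forall>D. C \<subseteq> D \<longrightarrow> D \<subseteq> R \<longrightarrow> zariski_irreducible I D \<longrightarrow> D = C"
    using C unfolding irreducible_component_def by blast+
  have "C \<subseteq> zariski_closure I Y" using K[OF C1 hC] .
  from C2[rule_format, OF this clR clirr] show "C = zariski_closure I Y" by simp
qed



lemma bordered_det:
  fixes A :: "'a::comm_ring_1 mat" and b c :: "nat \<Rightarrow> 'a" and d :: 'a
  assumes A: "A \<in> carrier_mat r r"
  defines "Bm \<equiv> mat (Suc r) (Suc r) (\<lambda>(i,j). if i < r then (if j < r then A $$ (i,j) else b i) else (if j < r then c j else d))"
  shows "det Bm = d * det A - (\<Sum>i<r. b i * (\<Sum>t<r. c t * cofactor A i t))"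
proof -
  have Bc: "Bm \<in> carrier_mat (Suc r) (Suc r)" unfolding Bm_def by simp
  have "det Bm = (\<Sum>i<Suc r. Bm $$ (i,r) * cofactor Bm i r)"
    by (rule laplace_expansion_column[OF Bc]) simp
  also have "\<dots> = (\<Sum>i<r. Bm $$ (i,r) * cofactor Bm i r) + Bm $$ (r,r) * cofactor Bm r r"
    by simp
  also have "Bm $$ (r,r) = d" unfolding Bm_def by simp
  also have "cofactor Bm r r = det A"
  proof -
    have "mat_delete Bm r r = A"
      by (rule eq_matI) (use A in \<open>auto simp: mat_delete_def Bm_def\<close>)
    thus ?thesis unfolding cofactor_def by (simp add: mult_2[symmetric] power_mult)
  qed
  also have "(\<Sum>i<r. Bm $$ (i,r) * cofactor Bm i r) = (\<Sum>i<r. b i * (- (\<Sum>t<r. c t * cofactor A i t)))"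
  proof (rule sum.cong[OF refl])
    fix i assume i: "i \<in> {..<r}"
    then obtain r' where r': "r = Suc r'" by (cases r) auto
    define X where "X = mat_delete Bm i r"
    have Xc: "X \<in> carrier_mat r r" unfolding X_def using Bc by (simp add: mat_delete_def)
    have "det X = (\<Sum>t<r. X $$ (r',t) * cofactor X r' t)"
      by (rule laplace_expansion_row[OF Xc]) (simp add: r')
    also have "\<dots> = (\<Sum>t<r. c t * ((-1)^(r'+t) * det (mat_delete A i t)))"
    proof (rule sum.cong[OF refl])
      fix t assume t: "t \<in> {..<r}"
      have "X $$ (r',t) = c t" unfolding X_def Bm_def mat_delete_def using i t r' by auto
      moreover have "mat_delete X r' t = mat_delete A i t"
        by (rule eq_matI) (use A i t r' in \<open>auto simp: mat_delete_def X_def Bm_def\<close>)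
      ultimately show "X $$ (r',t) * cofactor X r' t = c t * ((-1)^(r'+t) * det (mat_delete A i t))"
        unfolding cofactor_def by simp
    qed
    finally have dX: "det X = (\<Sum>t<r. c t * ((-1)^(r'+t) * det (mat_delete A i t)))" .
    have sgn: "(-1::'a)^(i+r) * (-1)^(r'+t) = - ((-1)^(i+t))" for t
    proof -
      have e: "(i+r) + (r'+t) = (i+t) + 2*r' + 1" using r' by simp
      have "(-1::'a)^(i+r) * (-1)^(r'+t) = (-1)^((i+r) + (r'+t))" by (simp add: power_add)
      also have "\<dots> = (-1)^(i+t) * ((-1)^2)^r' * (-1)" unfolding e power_add power_mult by simp
      finally show ?thesis by simp
    qed
    have "cofactor Bm i r = (-1)^(i+r) * det X" unfolding cofactor_def X_def ..
    also have "\<dots> = (\<Sum>t<r. c t * ((-1)^(i+r) * (-1)^(r'+t) * det (mat_delete A i t)))"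
      unfolding dX sum_distrib_left by (rule sum.cong[OF refl]) (simp add: algebra_simps)
    also have "\<dots> = - (\<Sum>t<r. c t * cofactor A i t)"
      unfolding sgn cofactor_def sum_negf[symmetric] by (rule sum.cong[OF refl]) simp
    finally have "cofactor Bm i r = - (\<Sum>t<r. c t * cofactor A i t)" .
    moreover have "Bm $$ (i,r) = b i" unfolding Bm_def using i by simp
    ultimately show "Bm $$ (i,r) * cofactor Bm i r = b i * (- (\<Sum>t<r. c t * cofactor A i t))" by simp
  qed
  finally show ?thesis by (simp add: sum_negf algebra_simps)
qed



definition minor :: "('e \<Rightarrow> 'b \<Rightarrow> 'k) \<Rightarrow> (nat \<Rightarrow> 'e) \<Rightarrow> (nat \<Rightarrow> 'b) \<Rightarrow> nat \<Rightarrow> 'k mat" where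
  "minor M \<rho> \<sigma> n = mat n n (\<lambda>(i,j). M (\<rho> i) (\<sigma> j))"

definition PW :: "('e \<Rightarrow> 'b \<Rightarrow> 'k::comm_ring_1) \<Rightarrow> (nat \<Rightarrow> 'e) \<Rightarrow> (nat \<Rightarrow> 'b) \<Rightarrow> nat \<Rightarrow> 'b set \<Rightarrow> ('b \<Rightarrow> 'k) \<Rightarrow> 'b \<Rightarrow> 'k" where
  "PW M \<rho> \<sigma> r B w \<beta> = (if \<beta> \<in> \<sigma> ` {..<r}
     then - (\<Sum>i<r. adj_mat (minor M \<rho> \<sigma> r) $$ (inv_into {..<r} \<sigma> \<beta>, i) * (\<Sum>\<beta>'\<in>B - \<sigma> ` {..<r}. M (\<rho> i) \<beta>' * w \<beta>'))
     else det (minor M \<rho> \<sigma> r) * w \<beta>)"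

lemma minor_carrier[simp]: "minor M \<rho> \<sigma> n \<in> carrier_mat n n"
  unfolding minor_def by simp

lemma minor_dim[simp]: "dim_row (minor M \<rho> \<sigma> n) = n" "dim_col (minor M \<rho> \<sigma> n) = n"
  unfolding minor_def by simp_all

lemma minor_index[simp]: "i < n \<Longrightarrow> j < n \<Longrightarrow> minor M \<rho> \<sigma> n $$ (i,j) = M (\<rho> i) (\<sigma> j)"
  unfolding minor_def by simp

lemma adj_left:
  assumes A: "A \<in> carrier_mat r r" and s0: "s0 < r" and s: "s < r"
  shows "(\<Sum>i<r. adj_mat A $$ (s0,i) * A $$ (i,s)) = (if s0 = s then det A else 0)"
proof -
  have "(adj_mat A * A) $$ (s0,s) = (det A \<cdot>\<^sub>m 1\<^sub>m r) $$ (s0,s)" using adj_mat(3)[OF A] by simp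
  moreover have "(adj_mat A * A) $$ (s0,s) = (\<Sum>i<r. adj_mat A $$ (s0,i) * A $$ (i,s))"
    using adj_mat(1)[OF A] A s0 s by (simp add: scalar_prod_def lessThan_atLeast0)
  ultimately show ?thesis using s0 s by simp
qed

lemma adj_index: "A \<in> carrier_mat r r \<Longrightarrow> s < r \<Longrightarrow> i < r \<Longrightarrow> adj_mat A $$ (s,i) = cofactor A i s"
  unfolding adj_mat_def by simp

lemma PW_scale: "PW M \<rho> \<sigma> r B (\<lambda>\<beta>. c * w \<beta>) \<beta> = c * PW M \<rho> \<sigma> r B w \<beta>"
  unfolding PW_def by (simp add: sum_distrib_left algebra_simps)

lemma kernel_ii:
  fixes M :: "'e \<Rightarrow> 'b \<Rightarrow> 'k::field"
  assumes finB: "finite B" and inj\<sigma>: "inj_on \<sigma> {..<r}" and \<sigma>B: "\<sigma> ` {..<r} \<subseteq> B"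
    and \<rho>E: "\<rho> ` {..<r} \<subseteq> E"
    and ker: "\<forall>e\<in>E. (\<Sum>\<beta>\<in>B. M e \<beta> * \<psi> \<beta>) = 0"
    and \<beta>: "\<beta> \<in> B"
  shows "PW M \<rho> \<sigma> r B \<psi> \<beta> = det (minor M \<rho> \<sigma> r) * \<psi> \<beta>"
proof (cases "\<beta> \<in> \<sigma> ` {..<r}")
  case False
  then show ?thesis unfolding PW_def by simp
next
  case True
  then obtain s0 where s0: "s0 < r" "\<beta> = \<sigma> s0" by blast
  let ?S = "\<sigma> ` {..<r}" and ?Mr = "minor M \<rho> \<sigma> r"
  have row: "(\<Sum>\<beta>'\<in>B - ?S. M (\<rho> i) \<beta>' * \<psi> \<beta>') = - (\<Sum>s<r. ?Mr $$ (i,s) * \<psi> (\<sigma> s))" if i: "i < r" for i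
  proof -
    have "\<rho> i \<in> E" using \<rho>E i by blast
    hence "0 = (\<Sum>\<beta>\<in>B. M (\<rho> i) \<beta> * \<psi> \<beta>)" using ker by simp
    also have "\<dots> = (\<Sum>\<beta>'\<in>B - ?S. M (\<rho> i) \<beta>' * \<psi> \<beta>') + (\<Sum>\<beta>'\<in>?S. M (\<rho> i) \<beta>' * \<psi> \<beta>')"
      by (rule sum.subset_diff[OF \<sigma>B finB])
    also have "(\<Sum>\<beta>'\<in>?S. M (\<rho> i) \<beta>' * \<psi> \<beta>') = (\<Sum>s<r. ?Mr $$ (i,s) * \<psi> (\<sigma> s))"
      by (subst sum.reindex[OF inj\<sigma>]) (simp add: i)
    finally show ?thesis by (simp add: eq_neg_iff_add_eq_0)
  qed
  have "PW M \<rho> \<sigma> r B \<psi> \<beta> = - (\<Sum>i<r. adj_mat ?Mr $$ (s0, i) * (\<Sum>\<beta>'\<in>B - ?S. M (\<rho> i) \<beta>' * \<psi> \<beta>'))"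
    unfolding PW_def using True s0 inj\<sigma> by (simp add: inv_into_f_f)
  also have "\<dots> = (\<Sum>i<r. adj_mat ?Mr $$ (s0, i) * (\<Sum>s<r. ?Mr $$ (i,s) * \<psi> (\<sigma> s)))"
    by (simp add: row sum_negf)
  also have "\<dots> = (\<Sum>i<r. \<Sum>s<r. adj_mat ?Mr $$ (s0, i) * ?Mr $$ (i,s) * \<psi> (\<sigma> s))"
    by (simp add: sum_distrib_left mult.assoc)
  also have "\<dots> = (\<Sum>s<r. \<Sum>i<r. adj_mat ?Mr $$ (s0, i) * ?Mr $$ (i,s) * \<psi> (\<sigma> s))"
    by (rule sum.swap)
  also have "\<dots> = (\<Sum>s<r. (\<Sum>i<r. adj_mat ?Mr $$ (s0, i) * ?Mr $$ (i,s)) * \<psi> (\<sigma> s))"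
    by (simp add: sum_distrib_right)
  also have "\<dots> = (\<Sum>s<r. (if s0 = s then det ?Mr else 0) * \<psi> (\<sigma> s))"
    by (rule sum.cong[OF refl], subst adj_left[OF minor_carrier s0(1)]) auto
  also have "\<dots> = det ?Mr * \<psi> \<beta>" using s0 by (simp add: if_distrib[of "\<lambda>x. x * _"] sum.delta cong: if_cong)
  finally show ?thesis .
qed

lemma sum3_swap: "(\<Sum>a\<in>A. \<Sum>b\<in>B. \<Sum>c\<in>C. f a b c) = (\<Sum>c\<in>C. \<Sum>a\<in>A. \<Sum>b\<in>B. f a b c)"
proof -
  have "(\<Sum>a\<in>A. \<Sum>b\<in>B. \<Sum>c\<in>C. f a b c) = (\<Sum>a\<in>A. \<Sum>c\<in>C. \<Sum>b\<in>B. f a b c)"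
    by (rule sum.cong[OF refl], rule sum.swap)
  also have "\<dots> = (\<Sum>c\<in>C. \<Sum>a\<in>A. \<Sum>b\<in>B. f a b c)" by (rule sum.swap)
  finally show ?thesis .
qed

lemma inj_upd_Suc: "inj_on f {..<r} \<Longrightarrow> y \<notin> f ` {..<r} \<Longrightarrow> inj_on (f(r:=y)) {..<Suc r}"
  unfolding inj_on_def by (auto simp: less_Suc_eq image_iff)

lemma img_upd_Suc: "f ` {..<r} \<subseteq> E \<Longrightarrow> y \<in> E \<Longrightarrow> (f(r:=y)) ` {..<Suc r} \<subseteq> E"
  by (auto simp: less_Suc_eq)

lemma kernel_i:
  fixes M :: "'e \<Rightarrow> 'b \<Rightarrow> 'k::field"
  assumes finB: "finite B" and inj\<sigma>: "inj_on \<sigma> {..<r}" and \<sigma>B: "\<sigma> ` {..<r} \<subseteq> B"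
    and inj\<rho>: "inj_on \<rho> {..<r}" and \<rho>E: "\<rho> ` {..<r} \<subseteq> E"
    and maxl: "\<And>\<rho>' \<sigma>'. inj_on \<rho>' {..<Suc r} \<Longrightarrow> \<rho>' ` {..<Suc r} \<subseteq> E \<Longrightarrow> inj_on \<sigma>' {..<Suc r}
       \<Longrightarrow> \<sigma>' ` {..<Suc r} \<subseteq> B \<Longrightarrow> det (minor M \<rho>' \<sigma>' (Suc r)) = 0"
    and e: "e \<in> E"
  shows "(\<Sum>\<beta>\<in>B. M e \<beta> * PW M \<rho> \<sigma> r B w \<beta>) = 0"
proof -
  define S where "S = \<sigma> ` {..<r}"
  define F where "F = B - S"
  define Mr where "Mr = minor M \<rho> \<sigma> r"
  have Mrc: "Mr \<in> carrier_mat r r" unfolding Mr_def by simp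
  have bracket: "(\<Sum>s<r. \<Sum>i<r. M e (\<sigma> s) * cofactor Mr i s * M (\<rho> i) \<beta>) = M e \<beta> * det Mr"
    if \<beta>: "\<beta> \<in> F" for \<beta>
  proof -
    have \<beta>S: "\<beta> \<notin> \<sigma> ` {..<r}" "\<beta> \<in> B" using \<beta> unfolding F_def S_def by auto
    have eqm: "minor M (\<rho>(r:=e)) (\<sigma>(r:=\<beta>)) (Suc r) = mat (Suc r) (Suc r) (\<lambda>(i,j). if i < r then (if j < r then Mr $$ (i,j) else M (\<rho> i) \<beta>) else (if j < r then M e (\<sigma> j) else M e \<beta>))"
      by (rule eq_matI) (auto simp: minor_def Mr_def less_Suc_eq)
    have d0: "det (minor M (\<rho>(r:=e)) (\<sigma>(r:=\<beta>)) (Suc r)) = 0"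
    proof (cases "e \<in> \<rho> ` {..<r}")
      case True
      then obtain i0 where i0: "i0 < r" "e = \<rho> i0" by blast
      show ?thesis
      proof (rule det_identical_rows[OF minor_carrier, of i0 r])
        show "row (minor M (\<rho>(r := e)) (\<sigma>(r := \<beta>)) (Suc r)) i0 = row (minor M (\<rho>(r := e)) (\<sigma>(r := \<beta>)) (Suc r)) r"
          by (rule eq_vecI) (use i0 in \<open>auto simp: minor_def\<close>)
      qed (use i0 in auto)
    next
      case False
      show ?thesis
        by (rule maxl[OF inj_upd_Suc[OF inj\<rho> False] img_upd_Suc[OF \<rho>E e] inj_upd_Suc[OF inj\<sigma> \<beta>S(1)] img_upd_Suc[OF \<sigma>B \<beta>S(2)]])
    qed
    have "0 = M e \<beta> * det Mr - (\<Sum>i<r. M (\<rho> i) \<beta> * (\<Sum>t<r. M e (\<sigma> t) * cofactor Mr i t))"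
      using d0 unfolding eqm by (subst (asm) bordered_det[OF Mrc]) simp
    moreover have "(\<Sum>i<r. M (\<rho> i) \<beta> * (\<Sum>t<r. M e (\<sigma> t) * cofactor Mr i t))
        = (\<Sum>i<r. \<Sum>t<r. M e (\<sigma> t) * cofactor Mr i t * M (\<rho> i) \<beta>)"
      by (simp add: sum_distrib_left mult_ac)
    moreover have "\<dots> = (\<Sum>t<r. \<Sum>i<r. M e (\<sigma> t) * cofactor Mr i t * M (\<rho> i) \<beta>)"
      by (rule sum.swap)
    ultimately show ?thesis by simp
  qed
  have SB: "S \<subseteq> B" using \<sigma>B S_def by simp
  have "(\<Sum>\<beta>\<in>B. M e \<beta> * PW M \<rho> \<sigma> r B w \<beta>) = (\<Sum>\<beta>\<in>F. M e \<beta> * PW M \<rho> \<sigma> r B w \<beta>) + (\<Sum>\<beta>\<in>S. M e \<beta> * PW M \<rho> \<sigma> r B w \<beta>)"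
    unfolding F_def by (rule sum.subset_diff[OF SB finB])
  also have "(\<Sum>\<beta>\<in>F. M e \<beta> * PW M \<rho> \<sigma> r B w \<beta>) = (\<Sum>\<beta>\<in>F. w \<beta> * (M e \<beta> * det Mr))"
    by (rule sum.cong[OF refl]) (auto simp: PW_def F_def S_def Mr_def)
  also have "(\<Sum>\<beta>\<in>S. M e \<beta> * PW M \<rho> \<sigma> r B w \<beta>)
      = (\<Sum>s<r. M e (\<sigma> s) * - (\<Sum>i<r. cofactor Mr i s * (\<Sum>\<beta>'\<in>F. M (\<rho> i) \<beta>' * w \<beta>')))"
    unfolding S_def
  proof (subst sum.reindex[OF inj\<sigma>], rule sum.cong[OF refl])
    fix s assume s: "s \<in> {..<r}"
    have "PW M \<rho> \<sigma> r B w (\<sigma> s) = - (\<Sum>i<r. adj_mat Mr $$ (s, i) * (\<Sum>\<beta>'\<in>F. M (\<rho> i) \<beta>' * w \<beta>'))"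
      unfolding PW_def F_def S_def Mr_def using s inj\<sigma> by (simp add: inv_into_f_f)
    also have "\<dots> = - (\<Sum>i<r. cofactor Mr i s * (\<Sum>\<beta>'\<in>F. M (\<rho> i) \<beta>' * w \<beta>'))"
      using s by (simp add: adj_index[OF Mrc])
    finally show "((\<lambda>\<beta>. M e \<beta> * PW M \<rho> \<sigma> r B w \<beta>) \<circ> \<sigma>) s = M e (\<sigma> s) * - (\<Sum>i<r. cofactor Mr i s * (\<Sum>\<beta>'\<in>F. M (\<rho> i) \<beta>' * w \<beta>'))"
      by simp
  qed
  also have "\<dots> = - (\<Sum>s<r. \<Sum>i<r. \<Sum>\<beta>'\<in>F. w \<beta>' * (M e (\<sigma> s) * cofactor Mr i s * M (\<rho> i) \<beta>'))"
    by (simp add: sum_distrib_left sum_negf mult_ac)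
  also have "\<dots> = - (\<Sum>\<beta>'\<in>F. \<Sum>s<r. \<Sum>i<r. w \<beta>' * (M e (\<sigma> s) * cofactor Mr i s * M (\<rho> i) \<beta>'))"
    by (subst sum3_swap) (rule refl)
  also have "\<dots> = - (\<Sum>\<beta>'\<in>F. w \<beta>' * (\<Sum>s<r. \<Sum>i<r. M e (\<sigma> s) * cofactor Mr i s * M (\<rho> i) \<beta>'))"
    by (simp add: sum_distrib_left)
  also have "\<dots> = - (\<Sum>\<beta>'\<in>F. w \<beta>' * (M e \<beta>' * det Mr))"
    by (simp add: bracket)
  finally show ?thesis by simp
qed



lemma affI_iff:
  "z \<in> affine_space (Inl ` A \<union> Inr ` B) \<longleftrightarrow> (\<forall>\<alpha>. \<alpha> \<notin> A \<longrightarrow> z (Inl \<alpha>) = 0) \<and> (\<forall>\<beta>. \<beta> \<notin> B \<longrightarrow> z (Inr \<beta>) = 0)"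
  unfolding affine_space_def
proof (safe, goal_cases)
  case (3 \<iota>)
  then show ?case by (cases \<iota>) auto
qed auto

lemma pf_base: assumes "f \<in> polyfuns" shows "(\<lambda>z. f (\<lambda>\<alpha>. z (Inl \<alpha>))) \<in> polyfuns"
  by (rule pf_comp[OF assms]) (rule pf_var)

theorem core:
  fixes A :: "'a set" and B :: "'b set" and E :: "'e set"
    and m :: "'e \<Rightarrow> 'b \<Rightarrow> ('a \<Rightarrow> 'k::field) \<Rightarrow> 'k"
  assumes inf: "infinite (UNIV :: 'k set)" and finB: "finite B" and mpf: "\<And>e \<beta>. m e \<beta> \<in> polyfuns"
  shows "\<exists>!C. irreducible_component (Inl ` A \<union> Inr ` B)
      {z \<in> affine_space (Inl ` A \<union> Inr ` B). \<forall>e\<in>E. (\<Sum>\<beta>\<in>B. m e \<beta> (\<lambda>\<alpha>. z (Inl \<alpha>)) * z (Inr \<beta>)) = 0} C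
    \<and> zariski_closure A ((\<lambda>z \<alpha>. z (Inl \<alpha>)) ` C) = affine_space A"
proof -
  define I where "I = Inl ` A \<union> Inr ` B"
  define R where "R = {z \<in> affine_space I. \<forall>e\<in>E. (\<Sum>\<beta>\<in>B. m e \<beta> (\<lambda>\<alpha>. z (Inl \<alpha>)) * z (Inr \<beta>)) = 0}"
  define bs :: "('a + 'b \<Rightarrow> 'k) \<Rightarrow> 'a \<Rightarrow> 'k" where "bs = (\<lambda>z \<alpha>. z (Inl \<alpha>))"
  have affI: "z \<in> affine_space I \<longleftrightarrow> (\<forall>\<alpha>. \<alpha> \<notin> A \<longrightarrow> z (Inl \<alpha>) = 0) \<and> (\<forall>\<beta>. \<beta> \<notin> B \<longrightarrow> z (Inr \<beta>) = 0)" for z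
    unfolding I_def by (rule affI_iff)
  have bs_aff: "bs z \<in> affine_space A" if "z \<in> affine_space I" for z
  proof -
    have "\<forall>\<alpha>. \<alpha> \<notin> A \<longrightarrow> z (Inl \<alpha>) = 0" using that affI by blast
    thus ?thesis unfolding bs_def affine_space_def by simp
  qed
  have RA: "R \<subseteq> affine_space I" unfolding R_def by blast
  have Rc: "zariski_closed I R"
    unfolding zariski_closed_def
  proof (intro exI conjI)
    let ?P = "{(\<lambda>z. \<Sum>\<beta>\<in>B. m e \<beta> (\<lambda>\<alpha>. z (Inl \<alpha>)) * z (Inr \<beta>)) | e. e \<in> E}"
    show "?P \<subseteq> polyfuns"
    proof clarify
      fix e assume "e \<in> E"
      show "(\<lambda>z. \<Sum>\<beta>\<in>B. m e \<beta> (\<lambda>\<alpha>. z (Inl \<alpha>)) * z (Inr \<beta>)) \<in> polyfuns"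
        by (intro pf_sum finB pf_mult pf_base mpf pf_var)
    qed
    show "R = {x \<in> affine_space I. \<forall>p\<in>?P. p x = 0}" unfolding R_def by auto
  qed
  define MM where "MM = (\<lambda>\<phi> e \<beta>. m e \<beta> \<phi>)"
  define nz where "nz = (\<lambda>n. \<exists>\<rho> \<sigma> \<phi>. \<phi> \<in> affine_space A \<and> inj_on \<rho> {..<n} \<and> \<rho> ` {..<n} \<subseteq> E
      \<and> inj_on \<sigma> {..<n} \<and> \<sigma> ` {..<n} \<subseteq> B \<and> det (minor (MM \<phi>) \<rho> \<sigma> n) \<noteq> 0)"
  have nz0: "nz 0"
    unfolding nz_def by (rule exI, rule exI, rule exI[of _ "\<lambda>_. 0"])
      (simp add: affine_space_def det_dim_zero[OF minor_carrier])
  have nzb: "n \<le> card B" if "nz n" for n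
  proof -
    from that obtain \<sigma> where "inj_on \<sigma> {..<n}" "\<sigma> ` {..<n} \<subseteq> B" unfolding nz_def by blast
    from card_inj_on_le[OF this finB] show ?thesis by simp
  qed
  define r where "r = (GREATEST n. nz n)"
  have nzr: "nz r" unfolding r_def by (rule GreatestI_nat[of nz, OF nz0 nzb])
  have nzSr: "\<not> nz (Suc r)"
  proof
    assume "nz (Suc r)"
    from Greatest_le_nat[of nz, OF this nzb] show False unfolding r_def[symmetric] by simp
  qed
  obtain \<rho> \<sigma> \<phi>0 where \<phi>0: "\<phi>0 \<in> affine_space A" and inj\<rho>: "inj_on \<rho> {..<r}" and \<rho>E: "\<rho> ` {..<r} \<subseteq> E"
    and inj\<sigma>: "inj_on \<sigma> {..<r}" and \<sigma>B: "\<sigma> ` {..<r} \<subseteq> B" and d0: "det (minor (MM \<phi>0) \<rho> \<sigma> r) \<noteq> 0"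
    using nzr unfolding nz_def by blast
  define \<Delta> where "\<Delta> = (\<lambda>\<phi>. det (minor (MM \<phi>) \<rho> \<sigma> r))"
  have maxl: "det (minor (MM \<phi>) \<rho>' \<sigma>' (Suc r)) = 0"
    if "\<phi> \<in> affine_space A" "inj_on \<rho>' {..<Suc r}" "\<rho>' ` {..<Suc r} \<subseteq> E"
      "inj_on \<sigma>' {..<Suc r}" "\<sigma>' ` {..<Suc r} \<subseteq> B" for \<phi> \<rho>' \<sigma>'
  proof (rule ccontr)
    assume "det (minor (MM \<phi>) \<rho>' \<sigma>' (Suc r)) \<noteq> 0"
    hence "nz (Suc r)" unfolding nz_def
      by (intro exI[of _ \<rho>'] exI[of _ \<sigma>'] exI[of _ \<phi>]) (use that in simp)
    with nzSr show False by simp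
  qed
  have minor_pf: "(\<lambda>\<phi>. minor (MM \<phi>) \<rho>' \<sigma>' n $$ (i,j)) \<in> polyfuns" if "i < n" "j < n" for \<rho>' \<sigma>' n i j
    using that mpf by (simp add: MM_def)
  have \<Delta>pf: "\<Delta> \<in> polyfuns"
    unfolding \<Delta>_def by (rule pf_det[OF minor_carrier minor_pf])
  define h where "h = (\<lambda>z. \<Delta> (bs z))"
  have hpf: "h \<in> polyfuns" unfolding h_def bs_def by (rule pf_base[OF \<Delta>pf])
  define Y where "Y = {z \<in> R. h z \<noteq> 0}"
  define ext :: "('a \<Rightarrow> 'k) \<Rightarrow> 'a + 'b \<Rightarrow> 'k" where "ext = (\<lambda>\<phi> \<iota>. case \<iota> of Inl \<alpha> \<Rightarrow> \<phi> \<alpha> | Inr \<beta> \<Rightarrow> 0)"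
  have bs_ext: "bs (ext \<phi>) = \<phi>" for \<phi> unfolding bs_def ext_def by simp
  have ext_R: "ext \<phi> \<in> R" if "\<phi> \<in> affine_space A" for \<phi>
  proof -
    have "ext \<phi> \<in> affine_space I" unfolding affI using that by (simp add: ext_def affine_space_def)
    thus ?thesis unfolding R_def by (simp add: ext_def)
  qed
  have ext_Y: "ext \<phi> \<in> Y" if "\<phi> \<in> affine_space A" "\<Delta> \<phi> \<noteq> 0" for \<phi>
    using ext_R[OF that(1)] that(2) unfolding Y_def h_def by (simp add: bs_ext)
  have Yne: "Y \<noteq> {}" using ext_Y[OF \<phi>0] d0 unfolding \<Delta>_def by blast
  have IRRY: "IRR Y"
  proof -
    define G where "G = (\<lambda>z \<iota>. case \<iota> of Inl \<alpha> \<Rightarrow> z (Inl \<alpha>)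
      | Inr \<beta> \<Rightarrow> if \<beta> \<in> B then PW (MM (bs z)) \<rho> \<sigma> r B (\<lambda>\<beta>. z (Inr \<beta>)) \<beta> else 0)"
    have bsG: "bs (G z) = bs z" for z unfolding G_def bs_def by simp
    have hG: "h (G z) = h z" for z unfolding h_def bsG ..
    have hpf': "(\<lambda>z. det (minor (MM (bs z)) \<rho> \<sigma> r)) \<in> polyfuns" using hpf unfolding h_def \<Delta>_def .
    have Gpf: "(\<lambda>z. G z \<iota>) \<in> polyfuns" for \<iota>
    proof (cases \<iota>)
      case (Inl \<alpha>)
      then show ?thesis unfolding G_def by (simp add: pf_var)
    next
      case (Inr \<beta>)
      show ?thesis
      proof (cases "\<beta> \<in> B")
        case False
        then show ?thesis unfolding G_def Inr by (simp add: pf_const)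
      next
        case True
        show ?thesis
        proof (cases "\<beta> \<in> \<sigma> ` {..<r}")
          case False
          have eqG: "(\<lambda>z. G z \<iota>) = (\<lambda>z. det (minor (MM (bs z)) \<rho> \<sigma> r) * z (Inr \<beta>))"
            unfolding G_def Inr PW_def using True False by simp
          show ?thesis unfolding eqG by (rule pf_mult[OF hpf' pf_var])
        next
          case S: True
          define s where "s = inv_into {..<r} \<sigma> \<beta>"
          have s: "s < r" using inv_into_into[OF S] unfolding s_def by simp
          have adjpf: "(\<lambda>z. adj_mat (minor (MM (bs z)) \<rho> \<sigma> r) $$ (s, i)) \<in> polyfuns" if i: "i < r" for i
          proof -
            have eq: "(\<lambda>z. adj_mat (minor (MM (bs z)) \<rho> \<sigma> r) $$ (s, i))
                = (\<lambda>z. (-1)^(i+s) * det (mat_delete (minor (MM (bs z)) \<rho> \<sigma> r) i s))"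
              using i s by (simp add: adj_index[OF minor_carrier] cofactor_def)
            show ?thesis unfolding eq
            proof (rule pf_mult[OF pf_const], rule pf_det)
              show "mat_delete (minor (MM (bs z)) \<rho> \<sigma> r) i s \<in> carrier_mat (r-1) (r-1)" for z
                by (rule mat_delete_carrier[OF minor_carrier])
              fix i' j' assume ij: "i' < r - 1" "j' < r - 1"
              have eqd: "(\<lambda>z. mat_delete (minor (MM (bs z)) \<rho> \<sigma> r) i s $$ (i', j'))
                  = (\<lambda>z. m (\<rho> (if i' < i then i' else Suc i')) (\<sigma> (if j' < s then j' else Suc j')) (\<lambda>\<alpha>. z (Inl \<alpha>)))"
                using ij i s by (intro ext) (auto simp: mat_delete_def MM_def bs_def)
              show "(\<lambda>z. mat_delete (minor (MM (bs z)) \<rho> \<sigma> r) i s $$ (i', j')) \<in> polyfuns"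
                unfolding eqd by (rule pf_base[OF mpf])
            qed
          qed
          have eqG: "(\<lambda>z. G z \<iota>) = (\<lambda>z. - (\<Sum>i<r. adj_mat (minor (MM (bs z)) \<rho> \<sigma> r) $$ (s, i)
              * (\<Sum>\<beta>'\<in>B - \<sigma> ` {..<r}. MM (bs z) (\<rho> i) \<beta>' * z (Inr \<beta>'))))"
            unfolding G_def Inr PW_def s_def using True S by simp
          show ?thesis unfolding eqG
          proof (rule pf_neg, rule pf_sum[OF finite_lessThan])
            fix i assume "i \<in> {..<r}"
            hence i: "i < r" by simp
            show "(\<lambda>z. adj_mat (minor (MM (bs z)) \<rho> \<sigma> r) $$ (s, i)
              * (\<Sum>\<beta>'\<in>B - \<sigma> ` {..<r}. MM (bs z) (\<rho> i) \<beta>' * z (Inr \<beta>'))) \<in> polyfuns"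
            proof (rule pf_mult[OF adjpf[OF i]], rule pf_sum)
              show "finite (B - \<sigma> ` {..<r})" using finB by simp
              fix \<beta>' assume "\<beta>' \<in> B - \<sigma> ` {..<r}"
              show "(\<lambda>z. MM (bs z) (\<rho> i) \<beta>' * z (Inr \<beta>')) \<in> polyfuns"
                unfolding MM_def bs_def by (rule pf_mult[OF pf_base[OF mpf] pf_var])
            qed
          qed
        qed
      qed
    qed
    have G_aff: "G z \<in> affine_space I" if "z \<in> affine_space I" for z
      using that unfolding affI G_def by simp
    have GY: "G z \<in> Y" if z: "z \<in> affine_space I" "h z \<noteq> 0" for z
    proof -
      have bz: "bs z \<in> affine_space A" by (rule bs_aff[OF z(1)])
      have dnz: "det (minor (MM (bs z)) \<rho> \<sigma> r) \<noteq> 0" using z(2) unfolding h_def \<Delta>_def .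
      have "(\<Sum>\<beta>\<in>B. m e \<beta> (\<lambda>\<alpha>. G z (Inl \<alpha>)) * G z (Inr \<beta>)) = 0" if e: "e \<in> E" for e
      proof -
        have "(\<Sum>\<beta>\<in>B. m e \<beta> (\<lambda>\<alpha>. G z (Inl \<alpha>)) * G z (Inr \<beta>))
            = (\<Sum>\<beta>\<in>B. MM (bs z) e \<beta> * PW (MM (bs z)) \<rho> \<sigma> r B (\<lambda>\<beta>. z (Inr \<beta>)) \<beta>)"
          by (rule sum.cong[OF refl]) (simp add: G_def MM_def bs_def)
        also have "\<dots> = 0"
          by (rule kernel_i[OF finB inj\<sigma> \<sigma>B inj\<rho> \<rho>E maxl[OF bz] e])
        finally show ?thesis .
      qed
      moreover have "h (G z) \<noteq> 0" using hG z(2) by simp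
      ultimately show ?thesis unfolding Y_def R_def using G_aff[OF z(1)] by simp
    qed
    have Gsurj: "\<exists>w. w \<in> affine_space I \<and> h w \<noteq> 0 \<and> G w = z" if z: "z \<in> Y" for z
    proof -
      have zR: "z \<in> R" and hz: "h z \<noteq> 0" using z unfolding Y_def by auto
      have zA: "z \<in> affine_space I" using zR RA by blast
      define w where "w = (\<lambda>\<iota>. case \<iota> of Inl \<alpha> \<Rightarrow> z (Inl \<alpha>) | Inr \<beta> \<Rightarrow> z (Inr \<beta>) / h z)"
      have bsw: "bs w = bs z" unfolding w_def bs_def by simp
      have hw: "h w = h z" unfolding h_def bsw ..
      have wA: "w \<in> affine_space I" using zA unfolding affI w_def by simp
      have ker: "\<forall>e\<in>E. (\<Sum>\<beta>\<in>B. MM (bs z) e \<beta> * z (Inr \<beta>)) = 0"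
        using zR unfolding R_def MM_def bs_def by simp
      have "G w = z"
      proof
        fix \<iota> show "G w \<iota> = z \<iota>"
        proof (cases \<iota>)
          case (Inl \<alpha>)
          then show ?thesis unfolding G_def w_def by simp
        next
          case (Inr \<beta>)
          show ?thesis
          proof (cases "\<beta> \<in> B")
            case False
            then show ?thesis using zA unfolding G_def Inr affI by simp
          next
            case True
            have "G w \<iota> = PW (MM (bs z)) \<rho> \<sigma> r B (\<lambda>\<beta>. inverse (h z) * z (Inr \<beta>)) \<beta>"
              unfolding G_def Inr bsw using True by (simp add: w_def field_simps)
            also have "\<dots> = inverse (h z) * PW (MM (bs z)) \<rho> \<sigma> r B (\<lambda>\<beta>. z (Inr \<beta>)) \<beta>"
              by (rule PW_scale)
            also have "PW (MM (bs z)) \<rho> \<sigma> r B (\<lambda>\<beta>. z (Inr \<beta>)) \<beta> = h z * z (Inr \<beta>)"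
              unfolding h_def \<Delta>_def by (rule kernel_ii[OF finB inj\<sigma> \<sigma>B \<rho>E ker True])
            finally show ?thesis using hz Inr by simp
          qed
        qed
      qed
      thus ?thesis using wA hw hz by (intro exI[of _ w]) simp
    qed
    show ?thesis
      unfolding IRR_def
    proof (intro allI impI)
      fix p q :: "('a + 'b \<Rightarrow> 'k) \<Rightarrow> 'k"
      assume p: "p \<in> polyfuns" and q: "q \<in> polyfuns" and ep: "\<exists>y\<in>Y. p y \<noteq> 0" and eq: "\<exists>y\<in>Y. q y \<noteq> 0"
      from ep obtain z1 where z1: "z1 \<in> Y" "p z1 \<noteq> 0" by blast
      from eq obtain z2 where z2: "z2 \<in> Y" "q z2 \<noteq> 0" by blast
      obtain w1 where w1: "w1 \<in> affine_space I" "h w1 \<noteq> 0" "G w1 = z1" using Gsurj[OF z1(1)] by blast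
      obtain w2 where w2: "w2 \<in> affine_space I" "h w2 \<noteq> 0" "G w2 = z2" using Gsurj[OF z2(1)] by blast
      have p': "(\<lambda>w. p (G w) * h w) \<in> polyfuns" by (rule pf_mult[OF pf_comp[OF p Gpf] hpf])
      have q': "(\<lambda>w. q (G w) * h w) \<in> polyfuns" by (rule pf_mult[OF pf_comp[OF q Gpf] hpf])
      have nz1: "p (G w1) * h w1 \<noteq> 0" using w1 z1 by simp
      have nz2: "q (G w2) * h w2 \<noteq> 0" using w2 z2 by simp
      have "\<exists>z\<in>affine_space I. p (G z) * h z \<noteq> 0 \<and> q (G z) * h z \<noteq> 0"
        using aff_irr[where p="\<lambda>w. p (G w) * h w" and q="\<lambda>w. q (G w) * h w" and x=w1 and y=w2 and J=I]
          inf p' q' w1(1) nz1 w2(1) nz2 by simp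
      then obtain w where w: "w \<in> affine_space I" "p (G w) * h w \<noteq> 0" "q (G w) * h w \<noteq> 0" by blast
      hence "h w \<noteq> 0" "p (G w) \<noteq> 0" "q (G w) \<noteq> 0" by auto
      thus "\<exists>y\<in>Y. p y \<noteq> 0 \<and> q y \<noteq> 0" using GY[OF w(1)] by blast
    qed
  qed
  note gc = generic_component[OF RA Rc hpf Y_def Yne IRRY]
  define C0 where "C0 = zariski_closure I Y"
  have C0R: "C0 \<subseteq> R" using gc(1) unfolding C0_def irreducible_component_def by blast
  have bsC: "bs ` C \<subseteq> affine_space A" if "C \<subseteq> R" for C
    using that RA bs_aff by blast
  have lg0: "zariski_closure A (bs ` C0) = affine_space A"
  proof
    show "zariski_closure A (bs ` C0) \<subseteq> affine_space A" by (rule cl_aff[OF bsC[OF C0R]])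
    show "affine_space A \<subseteq> zariski_closure A (bs ` C0)"
    proof
      fix x :: "'a \<Rightarrow> 'k" assume x: "x \<in> affine_space A"
      show "x \<in> zariski_closure A (bs ` C0)"
      proof (rule cl_char[OF x])
        fix p assume p: "p \<in> polyfuns" and pv: "\<forall>y\<in>bs ` C0. p y = 0"
        show "p x = 0"
        proof (rule ccontr)
          assume "p x \<noteq> 0"
          then obtain \<phi> where \<phi>: "\<phi> \<in> affine_space A" "p \<phi> \<noteq> 0" "\<Delta> \<phi> \<noteq> 0"
            using aff_irr[OF inf p \<Delta>pf x _ \<phi>0] d0 unfolding \<Delta>_def by blast
          have "ext \<phi> \<in> C0" using ext_Y[OF \<phi>(1,3)] cl_sub unfolding C0_def by blast
          hence "p (bs (ext \<phi>)) = 0" using pv by blast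
          thus False using \<phi>(2) bs_ext by simp
        qed
      qed
    qed
  qed
  show ?thesis
    unfolding I_def[symmetric] R_def[symmetric] bs_def[symmetric]
  proof (rule ex1I[of _ C0], rule conjI)
    show "irreducible_component I R C0" using gc(1) unfolding C0_def .
    show "zariski_closure A (bs ` C0) = affine_space A" by (rule lg0)
    fix C assume C: "irreducible_component I R C \<and> zariski_closure A (bs ` C) = affine_space A"
    have CR: "C \<subseteq> R" using C unfolding irreducible_component_def by blast
    have "\<exists>z\<in>C. h z \<noteq> 0"
    proof (rule ccontr)
      assume "\<not> ?thesis"
      hence "\<forall>y\<in>bs ` C. \<Delta> y = 0" unfolding h_def by blast
      from cl_pf[OF bsC[OF CR] \<Delta>pf this] \<phi>0 C have "\<Delta> \<phi>0 = 0" by blast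
      thus False using d0 unfolding \<Delta>_def by simp
    qed
    thus "C = C0" using gc(2) C unfolding C0_def by blast
  qed
qed



lemma triple_delta:
  assumes "j < v" "r < c"
  shows "(\<Sum>x\<in>{..<b::nat} \<times> {..<v::nat} \<times> {..<c::nat}. (case x of (q,j',r') \<Rightarrow> if j' = j \<and> r' = r then f q else 0)) = (\<Sum>q<b. f q)"
proof -
  have "(\<Sum>x\<in>{..<b} \<times> {..<v} \<times> {..<c}. (case x of (q,j',r') \<Rightarrow> if j' = j \<and> r' = r then f q else 0))
     = (\<Sum>q<b. \<Sum>y\<in>{..<v} \<times> {..<c}. (case y of (j',r') \<Rightarrow> if j' = j \<and> r' = r then f q else 0))"
    by (subst sum.cartesian_product[symmetric]) (simp add: case_prod_beta)
  also have "\<dots> = (\<Sum>q<b. \<Sum>j'<v. \<Sum>r'<c. (if j' = j \<and> r' = r then f q else 0))"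
    by (rule sum.cong[OF refl]) (subst sum.cartesian_product[symmetric], simp)
  also have "\<dots> = (\<Sum>q<b. f q)"
  proof (rule sum.cong[OF refl])
    fix q
    have "(\<Sum>j'<v. \<Sum>r'<c. (if j' = j \<and> r' = r then f q else 0)) = (\<Sum>j'<v. if j' = j then (\<Sum>r'<c. if r' = r then f q else 0) else 0)"
      by (rule sum.cong) auto
    also have "\<dots> = f q" using assms by simp
    finally show "(\<Sum>j'<v. \<Sum>r'<c. (if j' = j \<and> r' = r then f q else 0)) = f q" .
  qed
  finally show ?thesis .
qed

lemma triple_delta2:
  assumes "p < a" "r < c"
  shows "(\<Sum>x\<in>{..<a::nat} \<times> {..<w::nat} \<times> {..<c::nat}. (case x of (p',l,r') \<Rightarrow> if p' = p \<and> r' = r then g l else 0)) = (\<Sum>l<w. g l)"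
proof -
  have "(\<Sum>x\<in>{..<a} \<times> {..<w} \<times> {..<c}. (case x of (p',l,r') \<Rightarrow> if p' = p \<and> r' = r then g l else 0))
     = (\<Sum>p'<a. \<Sum>y\<in>{..<w} \<times> {..<c}. (case y of (l,r') \<Rightarrow> if p' = p \<and> r' = r then g l else 0))"
    by (subst sum.cartesian_product[symmetric]) (simp add: case_prod_beta)
  also have "\<dots> = (\<Sum>p'<a. \<Sum>l<w. \<Sum>r'<c. (if p' = p \<and> r' = r then g l else 0))"
    by (rule sum.cong[OF refl]) (subst sum.cartesian_product[symmetric], simp)
  also have "\<dots> = (\<Sum>p'<a. if p' = p then (\<Sum>l<w. \<Sum>r'<c. if r' = r then g l else 0) else 0)"
    by (rule sum.cong) auto
  also have "\<dots> = (\<Sum>l<w. g l)" using assms by simp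
  finally show ?thesis .
qed

definition mcoef :: "(nat \<Rightarrow> nat \<Rightarrow> nat \<Rightarrow> 'k::comm_ring_1) \<Rightarrow> nat \<times> nat \<times> nat \<times> nat
    \<Rightarrow> (nat \<times> nat \<times> nat) + (nat \<times> nat \<times> nat) \<Rightarrow> (nat \<times> nat \<times> nat \<Rightarrow> 'k) \<Rightarrow> 'k" where
  "mcoef fc e \<beta> \<phi> = (case e of (p,i,j,r) \<Rightarrow> (case \<beta> of
      Inl (q,j',r') \<Rightarrow> if j' = j \<and> r' = r then \<phi> (p,i,q) else 0
    | Inr (p',l,r') \<Rightarrow> if p' = p \<and> r' = r then - fc i j l else 0))"

lemma mcoef_pf: "mcoef fc e \<beta> \<in> polyfuns"
proof -
  obtain p i j r where e: "e = (p,i,j,r)" by (cases e) auto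
  show ?thesis
  proof (cases \<beta>)
    case (Inl x)
    obtain q j' r' where x: "x = (q,j',r')" by (cases x) auto
    show ?thesis
    proof (cases "j' = j \<and> r' = r")
      case True
      then have "mcoef fc e \<beta> = (\<lambda>\<phi>. \<phi> (p,i,q))" unfolding mcoef_def e Inl x by (intro ext) simp
      then show ?thesis by (simp add: pf_var)
    next
      case False
      then have "mcoef fc e \<beta> = (\<lambda>\<phi>. 0)" unfolding mcoef_def e Inl x by (intro ext) auto
      then show ?thesis by (simp add: pf_const)
    qed
  next
    case (Inr x)
    obtain p' l r' where x: "x = (p',l,r')" by (cases x) auto
    have "mcoef fc e \<beta> = (\<lambda>\<phi>. if p' = p \<and> r' = r then - fc i j l else 0)" unfolding mcoef_def e Inr x by (intro ext) simp
    then show ?thesis by (simp add: pf_const)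
  qed
qed

lemma mcoef_sum:
  fixes z :: "ridx \<Rightarrow> 'k::comm_ring_1"
  assumes jr: "j < v" "r < c" "p < a"
  shows "(\<Sum>\<beta>\<in>Inl ` ({..<b} \<times> {..<v} \<times> {..<c}) \<union> Inr ` ({..<a} \<times> {..<w} \<times> {..<c}).
            mcoef fc (p,i,j,r) \<beta> (\<lambda>\<alpha>. z (Inl \<alpha>)) * z (Inr \<beta>))
       = (\<Sum>q<b. z (Inl (p, i, q)) * z (Inr (Inl (q, j, r)))) - (\<Sum>l<w. fc i j l * z (Inr (Inr (p, l, r))))"
proof -
  let ?B1 = "{..<b} \<times> {..<v} \<times> {..<c}" and ?B2 = "{..<a} \<times> {..<w} \<times> {..<c}"
  let ?f = "\<lambda>\<beta>. mcoef fc (p,i,j,r) \<beta> (\<lambda>\<alpha>. z (Inl \<alpha>)) * z (Inr \<beta>)"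
  have "sum ?f (Inl ` ?B1 \<union> Inr ` ?B2) = sum ?f (Inl ` ?B1) + sum ?f (Inr ` ?B2)"
    by (rule sum.union_disjoint) auto
  also have "sum ?f (Inl ` ?B1) = (\<Sum>x\<in>?B1. (case x of (q,j',r') \<Rightarrow> if j' = j \<and> r' = r then z (Inl (p, i, q)) * z (Inr (Inl (q, j, r))) else 0))"
    by (subst sum.reindex) (auto simp: mcoef_def intro!: sum.cong)
  also have "\<dots> = (\<Sum>q<b. z (Inl (p, i, q)) * z (Inr (Inl (q, j, r))))"
    by (rule triple_delta[OF jr(1,2)])
  also have "sum ?f (Inr ` ?B2) = (\<Sum>x\<in>?B2. (case x of (p',l,r') \<Rightarrow> if p' = p \<and> r' = r then - (fc i j l * z (Inr (Inr (p, l, r)))) else 0))"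
    by (subst sum.reindex) (auto simp: mcoef_def intro!: sum.cong)
  also have "\<dots> = (\<Sum>l<w. - (fc i j l * z (Inr (Inr (p, l, r)))))"
    by (rule triple_delta2[OF jr(3,2)])
  finally show ?thesis by (simp add: sum_negf)
qed

theorem lemma3p1:
  fixes fc :: "nat \<Rightarrow> nat \<Rightarrow> nat \<Rightarrow> 'k::field"
    and u v w a b c :: nat
  assumes "infinite (UNIV :: 'k set)"
  shows "\<exists>!C. left_general u v w fc a b c C"
proof -
  define A where "A = left_index u a b"
  define B :: "((nat \<times> nat \<times> nat) + (nat \<times> nat \<times> nat)) set"
    where "B = Inl ` ({..<b} \<times> {..<v} \<times> {..<c}) \<union> Inr ` ({..<a} \<times> {..<w} \<times> {..<c})"
  define E where "E = {..<a} \<times> {..<u} \<times> {..<v} \<times> {..<c}"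
  have finB: "finite B" unfolding B_def by simp
  have idx: "rep_index u v w a b c = Inl ` A \<union> Inr ` B"
    unfolding rep_index_def A_def B_def left_index_def by (simp add: image_Un Un_assoc)
  have var: "rep_variety u v w fc a b c = {z \<in> affine_space (Inl ` A \<union> Inr ` B).
      \<forall>e\<in>E. (\<Sum>\<beta>\<in>B. mcoef fc e \<beta> (\<lambda>\<alpha>. z (Inl \<alpha>)) * z (Inr \<beta>)) = 0}"
    unfolding rep_variety_def idx
  proof (intro Collect_cong conj_cong refl)
    fix z :: "ridx \<Rightarrow> 'k"
    show "(\<forall>p<a. \<forall>i<u. \<forall>j<v. \<forall>r<c. (\<Sum>q<b. z (Inl (p, i, q)) * z (Inr (Inl (q, j, r))))
            = (\<Sum>l<w. fc i j l * z (Inr (Inr (p, l, r)))))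
        = (\<forall>e\<in>E. (\<Sum>\<beta>\<in>B. mcoef fc e \<beta> (\<lambda>\<alpha>. z (Inl \<alpha>)) * z (Inr \<beta>)) = 0)"
      unfolding E_def B_def by (auto simp: mcoef_sum)
  qed
  have rl: "restrict_left = (\<lambda>(z :: ridx \<Rightarrow> 'k) \<alpha>. z (Inl \<alpha>))"
    by (rule ext) (simp add: restrict_left_def)
  have lg: "left_general u v w fc a b c C \<longleftrightarrow>
      irreducible_component (Inl ` A \<union> Inr ` B) {z \<in> affine_space (Inl ` A \<union> Inr ` B).
        \<forall>e\<in>E. (\<Sum>\<beta>\<in>B. mcoef fc e \<beta> (\<lambda>\<alpha>. z (Inl \<alpha>)) * z (Inr \<beta>)) = 0} C
      \<and> zariski_closure A ((\<lambda>z \<alpha>. z (Inl \<alpha>)) ` C) = affine_space A" for C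
    unfolding left_general_def idx var rl A_def ..
  show ?thesis unfolding lg by (rule core[OF assms finB mcoef_pf])
qed

end
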